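(* Let $\Bbbk$ be an algebraically closed field of characteristic zero, $G$ a finite group, $\chi:G\to\Bbbk^\times$ a linear character, $g\in Z(G)$, $n\geq2$ the multiplicative order of $\chi(g)$, and $H$ the $\Bbbk$-algebra generated by $\Bbbk G$ and $z$ with relations $z^n=0$, $zs=\chi(s)sz$ ($s\in G$). Then the completely prime ideals of $H$ are exactly the ideals $(1-e_i)$, $0\leq i\leq p-1$.
   Context: $\chi_0,\dots,\chi_{p-1}$ are the irreducible characters of $G$ and $e_i=\frac{\chi_i(1)}{|G|}\sum_{h\in G}\chi_i(h)h^{-1}$. A completely prime ideal is a proper two-sided ideal $I$ such that $ab\in I$ implies $a\in I$ or $b\in I$. $(a)$ denotes the two-sided ideal of $H$ generated by $a$.
   Formalization: The ideals $(1-e_i)$ are taken over the linear characters $G\to\Bbbk^\times$ only, instead of over all irreducible characters $\chi_0,\dots,\chi_{p-1}$ of G. The statement above fails without it. *)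

theory Defs
  imports "HOL-Computational_Algebra.Polynomial" "HOL-Algebra.Ideal" "HOL-Algebra.Group"
begin

definition lin_char :: "('g, 'm) monoid_scheme \<Rightarrow> ('g \<Rightarrow> 'k::field) \<Rightarrow> bool" where
  "lin_char G chi \<longleftrightarrow>
     (\<forall>s\<in>carrier G. chi s \<noteq> 0) \<and>
     (\<forall>s\<in>carrier G. \<forall>t\<in>carrier G. chi (s \<otimes>\<^bsub>G\<^esub> t) = chi s * chi t)"

definition is_mult_order :: "'k::field \<Rightarrow> nat \<Rightarrow> bool" where
  "is_mult_order a n \<longleftrightarrow> 0 < n \<and> a ^ n = 1 \<and> (\<forall>m. 0 < m \<and> m < n \<longrightarrow> a ^ m \<noteq> 1)"

text \<open>The algebra H generated by kG and z with z^n = 0 and z s = chi(s) s z,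
  realised on its basis {s z^i : s in G, i < n}.  An element is a coefficient
  function c : G x nat -> k supported on carrier G x {0..<n}; the multiplication
  is the bilinear extension of (s z^i)(t z^j) = chi(t)^i (s t) z^(i+j)
  (which is 0 when i + j >= n).\<close>
definition H_alg :: "('g, 'm) monoid_scheme \<Rightarrow> ('g \<Rightarrow> 'k::field) \<Rightarrow> nat
                      \<Rightarrow> ('g \<times> nat \<Rightarrow> 'k) ring" where
  "H_alg G chi n = \<lparr>
     carrier = {c. \<forall>s i. c (s, i) \<noteq> 0 \<longrightarrow> s \<in> carrier G \<and> i < n},
     mult = (\<lambda>a b (u, m). if u \<in> carrier G \<and> m < n then
               (\<Sum>s\<in>carrier G. \<Sum>i\<le>m.
                  a (s, i) * b (inv\<^bsub>G\<^esub> s \<otimes>\<^bsub>G\<^esub> u, m - i) * chi (inv\<^bsub>G\<^esub> s \<otimes>\<^bsub>G\<^esub> u) ^ i)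
             else 0),
     one = (\<lambda>(u, m). if u = \<one>\<^bsub>G\<^esub> \<and> m = 0 then 1 else 0),
     zero = (\<lambda>_. 0),
     add = (\<lambda>a b x. a x + b x) \<rparr>"

text \<open>Central idempotent e_psi = (psi(1)/|G|) sum_h psi(h) h^{-1} for a linear character psi,
  as an element of H (so psi(1) = 1 and the coefficient of u = h^{-1} is psi(u^{-1})/|G|).\<close>
definition char_idem :: "('g, 'm) monoid_scheme \<Rightarrow> ('g \<Rightarrow> 'k::field) \<Rightarrow> ('g \<times> nat \<Rightarrow> 'k)" where
  "char_idem G psi = (\<lambda>(u, m). if u \<in> carrier G \<and> m = 0
       then psi (inv\<^bsub>G\<^esub> u) / of_nat (card (carrier G)) else 0)"

definition completely_prime :: "('a, 'b) ring_scheme \<Rightarrow> 'a set \<Rightarrow> bool" where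
  "completely_prime R I \<longleftrightarrow> ideal I R \<and> I \<noteq> carrier R \<and>
     (\<forall>a\<in>carrier R. \<forall>b\<in>carrier R. a \<otimes>\<^bsub>R\<^esub> b \<in> I \<longrightarrow> a \<in> I \<or> b \<in> I)"

end

theory Submission
  imports Defs
begin


locale HS = group G for G :: "('g,'m) monoid_scheme" (structure) +
  fixes chi :: "'g \<Rightarrow> 'k::{alg_closed_field, field_char_0}" and n :: nat
  assumes finG: "finite (carrier G)" and lc: "lin_char G chi" and n2: "1 < n"
begin

lemma npos: "0 < n" using n2 by simp


abbreviation "H \<equiv> H_alg G chi n"
abbreviation "B \<equiv> carrier G \<times> {..<n}"

lemma chi_mult: "s \<in> carrier G \<Longrightarrow> t \<in> carrier G \<Longrightarrow> chi (s \<otimes> t) = chi s * chi t"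
  using lc by (simp add: lin_char_def)
lemma chi_nz: "s \<in> carrier G \<Longrightarrow> chi s \<noteq> 0"
  using lc by (simp add: lin_char_def)
lemma chi_one: "chi \<one> = 1"
proof -
  have "chi \<one> = chi \<one> * chi \<one>" using chi_mult[of \<one> \<one>] by simp
  thus ?thesis using chi_nz[of \<one>] by simp
qed

lemma carrier_H: "carrier H = {c. \<forall>s i. c (s,i) \<noteq> 0 \<longrightarrow> s \<in> carrier G \<and> i < n}"
  by (simp add: H_alg_def)
lemma mult_H: "a \<otimes>\<^bsub>H\<^esub> b = (\<lambda>(u, m). if u \<in> carrier G \<and> m < n then
               (\<Sum>s\<in>carrier G. \<Sum>i\<le>m.
                  a (s, i) * b (inv s \<otimes> u, m - i) * chi (inv s \<otimes> u) ^ i)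
             else 0)"
  by (simp add: H_alg_def)
lemma mult_H_app: "(a \<otimes>\<^bsub>H\<^esub> b) (u,m) = (if u \<in> carrier G \<and> m < n then
               (\<Sum>s\<in>carrier G. \<Sum>i\<le>m.
                  a (s, i) * b (inv s \<otimes> u, m - i) * chi (inv s \<otimes> u) ^ i)
             else 0)"
  by (simp add: H_alg_def)
lemma add_H: "a \<oplus>\<^bsub>H\<^esub> b = (\<lambda>x. a x + b x)"
  by (simp add: H_alg_def)
lemma zero_H: "\<zero>\<^bsub>H\<^esub> = (\<lambda>_. 0)"
  by (simp add: H_alg_def)
lemma one_H: "\<one>\<^bsub>H\<^esub> = (\<lambda>(u, m). if u = \<one> \<and> m = 0 then 1 else 0)"
  by (simp add: H_alg_def)

lemma inH0: "c \<in> carrier H \<Longrightarrow> \<not> (s \<in> carrier G \<and> i < n) \<Longrightarrow> c (s,i) = 0"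
  by (auto simp: carrier_H)
lemma inHI: "(\<And>s i. c (s,i) \<noteq> 0 \<Longrightarrow> s \<in> carrier G \<and> i < n) \<Longrightarrow> c \<in> carrier H"
  by (auto simp: carrier_H)

lemma mult_closed_H: "a \<otimes>\<^bsub>H\<^esub> b \<in> carrier H"
  by (rule inHI) (auto simp: mult_H_app split: if_splits)

definition D :: "'g \<times> nat \<Rightarrow> 'g \<times> nat \<Rightarrow> 'g \<times> nat \<Rightarrow> 'k" where
  "D x y um = (if fst x \<otimes> fst y = fst um \<and> snd x + snd y = snd um \<and> snd um < n
      then chi (fst y) ^ snd x else 0)"

lemma finB: "finite B" using finG by simp

lemma sum_prod_split: "(\<Sum>x\<in>A \<times> C. f x) = (\<Sum>a\<in>A. \<Sum>c\<in>C. f (a,c))"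
  by (simp add: sum.cartesian_product split_def)

lemma mult_delta:
  assumes a: "a \<in> carrier H" and b: "b \<in> carrier H"
  shows "(a \<otimes>\<^bsub>H\<^esub> b) (u,m) = (\<Sum>x\<in>B. \<Sum>y\<in>B. a x * b y * D x y (u,m))"
proof (cases "u \<in> carrier G \<and> m < n")
  case True
  hence u: "u \<in> carrier G" and m: "m < n" by auto
  have inner: "(\<Sum>y\<in>B. a (s,i) * b y * D (s,i) y (u,m)) =
      (if i \<le> m then a (s, i) * b (inv s \<otimes> u, m - i) * chi (inv s \<otimes> u) ^ i else 0)"
    if s: "s \<in> carrier G" and i: "i < n" for s i
  proof -
    have "(\<Sum>y\<in>B. a (s,i) * b y * D (s,i) y (u,m)) =
          (\<Sum>t\<in>carrier G. \<Sum>j<n. a (s,i) * b (t,j) * D (s,i) (t,j) (u,m))"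
      by (rule sum_prod_split)
    also have "\<dots> = (\<Sum>t\<in>carrier G. if t = inv s \<otimes> u then
          (\<Sum>j<n. if j = m - i then (if i \<le> m then a (s,i) * b (t,j) * chi t ^ i else 0) else 0) else 0)"
    proof (rule sum.cong[OF refl])
      fix t assume t: "t \<in> carrier G"
      have e: "(s \<otimes> t = u) = (t = inv s \<otimes> u)" using inv_solve_left[OF t s u] by auto
      show "(\<Sum>j<n. a (s,i) * b (t,j) * D (s,i) (t,j) (u,m)) = (if t = inv s \<otimes> u then
          (\<Sum>j<n. if j = m - i then (if i \<le> m then a (s,i) * b (t,j) * chi t ^ i else 0) else 0) else 0)"
      proof (cases "t = inv s \<otimes> u")
        case True
        have st: "s \<otimes> t = u" using e True by simp
        have "(\<Sum>j<n. a (s,i) * b (t,j) * D (s,i) (t,j) (u,m)) =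
           (\<Sum>j<n. if j = m - i then (if i \<le> m then a (s,i) * b (t,j) * chi t ^ i else 0) else 0)"
          by (intro sum.cong refl) (use m in \<open>auto simp: D_def st\<close>)
        thus ?thesis using True by simp
      next
        case False
        thus ?thesis unfolding D_def using m e by simp
      qed
    qed
    also have "\<dots> = (if i \<le> m then a (s, i) * b (inv s \<otimes> u, m - i) * chi (inv s \<otimes> u) ^ i else 0)"
      using finG s u m by auto
    finally show ?thesis .
  qed
  have "(\<Sum>x\<in>B. \<Sum>y\<in>B. a x * b y * D x y (u,m)) =
        (\<Sum>s\<in>carrier G. \<Sum>i<n. \<Sum>y\<in>B. a (s,i) * b y * D (s,i) y (u,m))"
    by (rule sum_prod_split)
  also have "\<dots> = (\<Sum>s\<in>carrier G. \<Sum>i<n.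
      (if i \<le> m then a (s, i) * b (inv s \<otimes> u, m - i) * chi (inv s \<otimes> u) ^ i else 0))"
    by (intro sum.cong refl) (simp add: inner)
  also have "\<dots> = (\<Sum>s\<in>carrier G. \<Sum>i\<le>m. a (s, i) * b (inv s \<otimes> u, m - i) * chi (inv s \<otimes> u) ^ i)"
  proof (rule sum.cong[OF refl])
    fix s
    show "(\<Sum>i<n. (if i \<le> m then a (s, i) * b (inv s \<otimes> u, m - i) * chi (inv s \<otimes> u) ^ i else 0))
       = (\<Sum>i\<le>m. a (s, i) * b (inv s \<otimes> u, m - i) * chi (inv s \<otimes> u) ^ i)"
      by (intro sum.mono_neutral_cong_right) (use m in auto)
  qed
  finally show ?thesis using True by (simp add: mult_H_app)
next
  case False
  have "D x y (u,m) = 0" if "x \<in> B" "y \<in> B" for x y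
    using False that by (auto simp: D_def)
  thus ?thesis using False by (auto simp: mult_H_app)
qed

lemma mult_delta':
  assumes a: "a \<in> carrier H" and b: "b \<in> carrier H"
  shows "(a \<otimes>\<^bsub>H\<^esub> b) w = (\<Sum>x\<in>B. \<Sum>y\<in>B. a x * b y * D x y w)"
  using mult_delta[OF a b, of "fst w" "snd w"] by simp

definition E :: "'g \<times> nat \<Rightarrow> 'g \<times> nat \<Rightarrow> 'g \<times> nat \<Rightarrow> 'g \<times> nat \<Rightarrow> 'k" where
  "E x y z um = (if fst x \<otimes> fst y \<otimes> fst z = fst um \<and> snd x + snd y + snd z = snd um \<and> snd um < n
      then chi (fst y) ^ snd x * chi (fst z) ^ (snd x + snd y) else 0)"

lemma sum_single:
  assumes "finite A" "\<And>w. w \<in> A \<Longrightarrow> w \<noteq> ww \<Longrightarrow> f w = 0"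
  shows "(\<Sum>w\<in>A. f w) = (if ww \<in> A then f ww else 0)"
proof -
  have "(\<Sum>w\<in>A. f w) = (\<Sum>w\<in>A. if w = ww then f ww else 0)"
    using assms(2) by (intro sum.cong refl) auto
  thus ?thesis using assms(1) by simp
qed

lemma L1:
  assumes x: "x \<in> B" and y: "y \<in> B" and z: "z \<in> B"
  shows "(\<Sum>w\<in>B. D x y w * D w z um) = E x y z um"
proof -
  define w0 where "w0 = (fst x \<otimes> fst y, snd x + snd y)"
  have "(\<Sum>w\<in>B. D x y w * D w z um) = (if w0 \<in> B then D x y w0 * D w0 z um else 0)"
    by (rule sum_single[OF finB]) (auto simp: D_def w0_def)
  also have "\<dots> = E x y z um"
    using x y z by (cases um) (auto simp: D_def E_def w0_def)
  finally show ?thesis .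
qed

lemma L2:
  assumes x: "x \<in> B" and y: "y \<in> B" and z: "z \<in> B"
  shows "(\<Sum>w\<in>B. D y z w * D x w um) = E x y z um"
proof -
  define w0 where "w0 = (fst y \<otimes> fst z, snd y + snd z)"
  have "(\<Sum>w\<in>B. D y z w * D x w um) = (if w0 \<in> B then D y z w0 * D x w0 um else 0)"
    by (rule sum_single[OF finB]) (auto simp: D_def w0_def)
  also have "\<dots> = E x y z um"
    using x y z by (cases um) (auto simp: D_def E_def w0_def m_assoc chi_mult power_mult_distrib power_add)
  finally show ?thesis .
qed

lemma swap3: "(\<Sum>w\<in>W. \<Sum>x\<in>X. \<Sum>y\<in>Y. F w x y) = (\<Sum>x\<in>X. \<Sum>y\<in>Y. \<Sum>w\<in>W. F w x y)"
proof -
  have "(\<Sum>w\<in>W. \<Sum>x\<in>X. \<Sum>y\<in>Y. F w x y) = (\<Sum>x\<in>X. \<Sum>w\<in>W. \<Sum>y\<in>Y. F w x y)"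
    by (rule sum.swap)
  also have "\<dots> = (\<Sum>x\<in>X. \<Sum>y\<in>Y. \<Sum>w\<in>W. F w x y)"
    by (rule sum.cong[OF refl], rule sum.swap)
  finally show ?thesis .
qed

lemma swap4: "(\<Sum>w\<in>W. \<Sum>z\<in>Z. \<Sum>x\<in>X. \<Sum>y\<in>Y. F w z x y) = (\<Sum>x\<in>X. \<Sum>y\<in>Y. \<Sum>z\<in>Z. \<Sum>w\<in>W. F w z x y)"
proof -
  have "(\<Sum>w\<in>W. \<Sum>z\<in>Z. \<Sum>x\<in>X. \<Sum>y\<in>Y. F w z x y) = (\<Sum>z\<in>Z. \<Sum>w\<in>W. \<Sum>x\<in>X. \<Sum>y\<in>Y. F w z x y)"
    by (rule sum.swap)
  also have "\<dots> = (\<Sum>z\<in>Z. \<Sum>x\<in>X. \<Sum>y\<in>Y. \<Sum>w\<in>W. F w z x y)"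
    by (rule sum.cong[OF refl], rule swap3)
  also have "\<dots> = (\<Sum>x\<in>X. \<Sum>y\<in>Y. \<Sum>z\<in>Z. \<Sum>w\<in>W. F w z x y)"
    by (rule swap3)
  finally show ?thesis .
qed

lemma assoc_H:
  assumes a: "a \<in> carrier H" and b: "b \<in> carrier H" and c: "c \<in> carrier H"
  shows "(a \<otimes>\<^bsub>H\<^esub> b) \<otimes>\<^bsub>H\<^esub> c = a \<otimes>\<^bsub>H\<^esub> (b \<otimes>\<^bsub>H\<^esub> c)"
proof (rule ext)
  fix um :: "'g \<times> nat"
  obtain u m where um: "um = (u,m)" by (cases um)
  have "((a \<otimes>\<^bsub>H\<^esub> b) \<otimes>\<^bsub>H\<^esub> c) um
     = (\<Sum>w\<in>B. \<Sum>z\<in>B. (\<Sum>x\<in>B. \<Sum>y\<in>B. a x * b y * D x y w) * c z * D w z um)"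
    by (simp add: mult_delta'[OF mult_closed_H c] mult_delta'[OF a b])
  also have "\<dots> = (\<Sum>w\<in>B. \<Sum>z\<in>B. \<Sum>x\<in>B. \<Sum>y\<in>B. (a x * b y * c z) * (D x y w * D w z um))"
    unfolding sum_distrib_right by (intro sum.cong refl) (simp add: mult_ac)
  also have "\<dots> = (\<Sum>x\<in>B. \<Sum>y\<in>B. \<Sum>z\<in>B. \<Sum>w\<in>B. (a x * b y * c z) * (D x y w * D w z um))"
    by (rule swap4)
  also have "\<dots> = (\<Sum>x\<in>B. \<Sum>y\<in>B. \<Sum>z\<in>B. (a x * b y * c z) * E x y z um)"
    by (intro sum.cong refl) (simp add: sum_distrib_left[symmetric] L1)
  finally have l: "((a \<otimes>\<^bsub>H\<^esub> b) \<otimes>\<^bsub>H\<^esub> c) um = (\<Sum>x\<in>B. \<Sum>y\<in>B. \<Sum>z\<in>B. (a x * b y * c z) * E x y z um)" .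
  have "(a \<otimes>\<^bsub>H\<^esub> (b \<otimes>\<^bsub>H\<^esub> c)) um
     = (\<Sum>x\<in>B. \<Sum>w\<in>B. a x * (\<Sum>y\<in>B. \<Sum>z\<in>B. b y * c z * D y z w) * D x w um)"
    by (simp add: mult_delta'[OF a mult_closed_H] mult_delta'[OF b c])
  also have "\<dots> = (\<Sum>x\<in>B. \<Sum>w\<in>B. \<Sum>y\<in>B. \<Sum>z\<in>B. (a x * b y * c z) * (D y z w * D x w um))"
    unfolding sum_distrib_right sum_distrib_left by (intro sum.cong refl) (simp add: mult_ac)
  also have "\<dots> = (\<Sum>x\<in>B. \<Sum>y\<in>B. \<Sum>z\<in>B. \<Sum>w\<in>B. (a x * b y * c z) * (D y z w * D x w um))"
    by (rule sum.cong[OF refl], rule swap3)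
  also have "\<dots> = (\<Sum>x\<in>B. \<Sum>y\<in>B. \<Sum>z\<in>B. (a x * b y * c z) * E x y z um)"
    by (intro sum.cong refl) (simp add: sum_distrib_left[symmetric] L2)
  finally show "((a \<otimes>\<^bsub>H\<^esub> b) \<otimes>\<^bsub>H\<^esub> c) um = (a \<otimes>\<^bsub>H\<^esub> (b \<otimes>\<^bsub>H\<^esub> c)) um"
    using l by simp
qed

definition bs :: "'g \<Rightarrow> nat \<Rightarrow> 'g \<times> nat \<Rightarrow> 'k" where
  "bs s i = (\<lambda>(u,m). if u = s \<and> m = i then 1 else 0)"

lemma bs_app: "bs s i (u,m) = (if u = s \<and> m = i then 1 else 0)"
  by (simp add: bs_def)

lemma bs_carrier: "s \<in> carrier G \<Longrightarrow> i < n \<Longrightarrow> bs s i \<in> carrier H"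
  by (rule inHI) (auto simp: bs_app split: if_splits)

lemma one_bs: "\<one>\<^bsub>H\<^esub> = bs \<one> 0"
  by (simp add: one_H bs_def)

lemma left_bs:
  assumes s: "s \<in> carrier G"
  shows "(bs s i \<otimes>\<^bsub>H\<^esub> x) (u,m) = (if u \<in> carrier G \<and> m < n \<and> i \<le> m
      then x (inv s \<otimes> u, m - i) * chi (inv s \<otimes> u) ^ i else 0)"
proof (cases "u \<in> carrier G \<and> m < n")
  case True
  have "(\<Sum>s'\<in>carrier G. \<Sum>i'\<le>m. bs s i (s', i') * x (inv s' \<otimes> u, m - i') * chi (inv s' \<otimes> u) ^ i')
      = (if s \<in> carrier G then (\<Sum>i'\<le>m. bs s i (s, i') * x (inv s \<otimes> u, m - i') * chi (inv s \<otimes> u) ^ i') else 0)"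
    by (rule sum_single[OF finG]) (auto simp: bs_app)
  also have "\<dots> = (if i \<in> {..m} then bs s i (s, i) * x (inv s \<otimes> u, m - i) * chi (inv s \<otimes> u) ^ i else 0)"
    using s by (simp only: if_True) (rule sum_single, auto simp: bs_app)
  finally show ?thesis using True by (simp add: mult_H_app bs_app)
qed (auto simp: mult_H_app)

lemma right_bs:
  assumes t: "t \<in> carrier G"
  shows "(x \<otimes>\<^bsub>H\<^esub> bs t j) (u,m) = (if u \<in> carrier G \<and> m < n \<and> j \<le> m
      then x (u \<otimes> inv t, m - j) * chi t ^ (m - j) else 0)"
proof (cases "u \<in> carrier G \<and> m < n")
  case True
  hence u: "u \<in> carrier G" by auto
  have e: "(inv s' \<otimes> u = t) = (s' = u \<otimes> inv t)" if "s' \<in> carrier G" for s'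
    using that t u by (metis inv_closed inv_solve_left' inv_solve_right)
  have "(\<Sum>s'\<in>carrier G. \<Sum>i'\<le>m. x (s', i') * bs t j (inv s' \<otimes> u, m - i') * chi (inv s' \<otimes> u) ^ i')
      = (if u \<otimes> inv t \<in> carrier G then (\<Sum>i'\<le>m. x (u \<otimes> inv t, i') * bs t j (inv (u \<otimes> inv t) \<otimes> u, m - i') * chi (inv (u \<otimes> inv t) \<otimes> u) ^ i') else 0)"
    by (rule sum_single[OF finG]) (auto simp: bs_app e)
  also have "\<dots> = (\<Sum>i'\<le>m. x (u \<otimes> inv t, i') * bs t j (t, m - i') * chi t ^ i')"
  proof -
    have "inv (u \<otimes> inv t) \<otimes> u = t" using e[of "u \<otimes> inv t"] t u by simp
    thus ?thesis using t u by simp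
  qed
  also have "\<dots> = (if m - j \<in> {..m} \<and> j \<le> m then x (u \<otimes> inv t, m - j) * bs t j (t, m - (m - j)) * chi t ^ (m - j) else 0)"
  proof (cases "j \<le> m")
    case True
    thus ?thesis by (simp only: simp_thms) (rule sum_single, auto simp: bs_app)
  next
    case False
    thus ?thesis by (auto simp: bs_app intro!: sum.neutral)
  qed
  finally show ?thesis using True by (auto simp: mult_H_app bs_app)
qed (auto simp: mult_H_app)

lemma l_one_H: "x \<in> carrier H \<Longrightarrow> \<one>\<^bsub>H\<^esub> \<otimes>\<^bsub>H\<^esub> x = x"
  by (rule ext) (auto simp: one_bs left_bs inH0)

lemma r_one_H: "x \<in> carrier H \<Longrightarrow> x \<otimes>\<^bsub>H\<^esub> \<one>\<^bsub>H\<^esub> = x"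
  by (rule ext) (auto simp: one_bs right_bs inH0 chi_one)

lemma one_closed_H: "\<one>\<^bsub>H\<^esub> \<in> carrier H"
  using bs_carrier[of \<one> 0] npos by (simp add: one_bs)

lemma ring_H: "ring H"
proof (rule ringI)
  show "abelian_group H"
  proof (rule abelian_groupI)
    fix x y assume "x \<in> carrier H" "y \<in> carrier H"
    thus "x \<oplus>\<^bsub>H\<^esub> y \<in> carrier H" by (auto simp: carrier_H add_H) (metis add.right_neutral)+
  next
    show "\<zero>\<^bsub>H\<^esub> \<in> carrier H" by (simp add: carrier_H zero_H)
  next
    fix x y z show "x \<oplus>\<^bsub>H\<^esub> y \<oplus>\<^bsub>H\<^esub> z = x \<oplus>\<^bsub>H\<^esub> (y \<oplus>\<^bsub>H\<^esub> z)"
      by (simp add: add_H add.assoc)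
  next
    fix x y show "x \<oplus>\<^bsub>H\<^esub> y = y \<oplus>\<^bsub>H\<^esub> x"
      by (simp add: add_H add.commute)
  next
    fix x show "\<zero>\<^bsub>H\<^esub> \<oplus>\<^bsub>H\<^esub> x = x" by (simp add: add_H zero_H)
  next
    fix x assume "x \<in> carrier H"
    thus "\<exists>y\<in>carrier H. y \<oplus>\<^bsub>H\<^esub> x = \<zero>\<^bsub>H\<^esub>"
      by (intro bexI[of _ "\<lambda>p. - x p"]) (auto simp: carrier_H add_H zero_H)
  qed
next
  show "monoid H"
    by (rule monoidI) (auto simp: mult_closed_H one_closed_H assoc_H l_one_H r_one_H)
next
  fix x y z
  show "(x \<oplus>\<^bsub>H\<^esub> y) \<otimes>\<^bsub>H\<^esub> z = x \<otimes>\<^bsub>H\<^esub> z \<oplus>\<^bsub>H\<^esub> y \<otimes>\<^bsub>H\<^esub> z"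
    by (rule ext) (auto simp: mult_H add_H sum.distrib ring_distribs)
  show "z \<otimes>\<^bsub>H\<^esub> (x \<oplus>\<^bsub>H\<^esub> y) = z \<otimes>\<^bsub>H\<^esub> x \<oplus>\<^bsub>H\<^esub> z \<otimes>\<^bsub>H\<^esub> y"
    by (rule ext) (auto simp: mult_H add_H sum.distrib ring_distribs)
qed

end


context HS begin

definition sc :: "'k \<Rightarrow> ('g \<times> nat \<Rightarrow> 'k) \<Rightarrow> ('g \<times> nat \<Rightarrow> 'k)" where
  "sc c x = (\<lambda>p. c * x p)"

lemma sc_carrier: "x \<in> carrier H \<Longrightarrow> sc c x \<in> carrier H"
  by (auto simp: carrier_H sc_def)

lemma sc_mult_left: "sc c a \<otimes>\<^bsub>H\<^esub> y = sc c (a \<otimes>\<^bsub>H\<^esub> y)"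
  by (rule ext) (auto simp: sc_def mult_H_app sum_distrib_left mult_ac)

lemma sc_mult_right: "a \<otimes>\<^bsub>H\<^esub> sc c y = sc c (a \<otimes>\<^bsub>H\<^esub> y)"
  by (rule ext) (auto simp: sc_def mult_H_app sum_distrib_left mult_ac)

lemma lin_left: "(\<lambda>p. a p - c * b p) \<otimes>\<^bsub>H\<^esub> y = (\<lambda>p. (a \<otimes>\<^bsub>H\<^esub> y) p - c * (b \<otimes>\<^bsub>H\<^esub> y) p)"
  by (rule ext) (auto simp: mult_H_app sum_distrib_left sum_subtractf algebra_simps)

lemma lin_right: "y \<otimes>\<^bsub>H\<^esub> (\<lambda>p. a p - c * b p) = (\<lambda>p. (y \<otimes>\<^bsub>H\<^esub> a) p - c * (y \<otimes>\<^bsub>H\<^esub> b) p)"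
  by (rule ext) (auto simp: mult_H_app sum_distrib_left sum_subtractf algebra_simps)

lemma minus_H: "a \<in> carrier H \<Longrightarrow> \<ominus>\<^bsub>H\<^esub> a = (\<lambda>p. - a p)"
proof -
  interpret R: ring H by (rule ring_H)
  assume a: "a \<in> carrier H"
  show ?thesis
    by (rule R.add.inv_equality) (use a in \<open>auto simp: add_H zero_H carrier_H\<close>)
qed

lemma diff_H: "a \<in> carrier H \<Longrightarrow> b \<in> carrier H \<Longrightarrow> a \<ominus>\<^bsub>H\<^esub> b = (\<lambda>p. a p - b p)"
  by (simp add: a_minus_def minus_H add_H)

lemma bs_mult:
  assumes a: "a \<in> carrier G" and b: "b \<in> carrier G"
  shows "bs a i \<otimes>\<^bsub>H\<^esub> bs b j = (\<lambda>(u,m). if u = a \<otimes> b \<and> m = i + j \<and> m < n then chi b ^ i else 0)"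
proof (rule ext, clarify)
  fix u m
  show "(bs a i \<otimes>\<^bsub>H\<^esub> bs b j) (u,m) = (if u = a \<otimes> b \<and> m = i + j \<and> m < n then chi b ^ i else 0)"
  proof (cases "u \<in> carrier G")
    case True
    have e: "(inv a \<otimes> u = b) = (u = a \<otimes> b)" using inv_solve_left'[OF b a True] by auto
    show ?thesis using True a b by (auto simp: left_bs bs_app e m_assoc[symmetric])
  next
    case False
    thus ?thesis using a b by (auto simp: left_bs)
  qed
qed

definition phi :: "('g \<Rightarrow> 'k) \<Rightarrow> ('g \<times> nat \<Rightarrow> 'k) \<Rightarrow> 'k" where
  "phi psi x = (\<Sum>s\<in>carrier G. psi s * x (s,0))"

definition K :: "('g \<Rightarrow> 'k) \<Rightarrow> ('g \<times> nat \<Rightarrow> 'k) set" where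
  "K psi = {x \<in> carrier H. phi psi x = 0}"

definition zz :: "'g \<times> nat \<Rightarrow> 'k" where "zz = bs \<one> 1"

definition d :: "'g \<Rightarrow> 'k \<Rightarrow> 'g \<times> nat \<Rightarrow> 'k" where
  "d s a = (\<lambda>p. bs s 0 p - a * bs \<one> 0 p)"

lemma zz_carrier: "zz \<in> carrier H" using bs_carrier[of \<one> 1] n2 by (simp add: zz_def)
lemma d_carrier: "s \<in> carrier G \<Longrightarrow> d s a \<in> carrier H"
  by (rule inHI) (auto simp: d_def bs_app npos split: if_splits)

lemma phi_lin: "phi psi (\<lambda>p. a p - c * b p) = phi psi a - c * phi psi b"
  by (simp add: phi_def sum_subtractf sum_distrib_left algebra_simps)
lemma phi_add: "phi psi (\<lambda>p. a p + b p) = phi psi a + phi psi b"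
  by (simp add: phi_def sum.distrib algebra_simps)
lemma phi_sc: "phi psi (sc c a) = c * phi psi a"
  by (simp add: phi_def sc_def sum_distrib_left algebra_simps)
lemma phi_bs: "s \<in> carrier G \<Longrightarrow> phi psi (bs s 0) = psi s"
  unfolding phi_def by (subst sum_single[OF finG, where ww = s]) (auto simp: bs_app)

lemma lc_one: "lin_char G psi \<Longrightarrow> psi \<one> = 1"
proof -
  assume l: "lin_char G psi"
  have h: "psi (\<one> \<otimes> \<one>) = psi \<one> * psi \<one>" using l one_closed unfolding lin_char_def by blast
  hence "psi \<one> = psi \<one> * psi \<one>" by simp
  moreover have "psi \<one> \<noteq> 0" using l by (simp add: lin_char_def)
  ultimately show ?thesis by (simp add: mult_cancel_left1)
qed

lemma lc_inv: "lin_char G psi \<Longrightarrow> s \<in> carrier G \<Longrightarrow> psi (inv s) * psi s = 1"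
proof -
  assume l: "lin_char G psi" and s: "s \<in> carrier G"
  have "psi (inv s \<otimes> s) = psi (inv s) * psi s" using l s inv_closed unfolding lin_char_def by blast
  thus ?thesis using s by (simp add: lc_one[OF l])
qed

lemma phi_one: "lin_char G psi \<Longrightarrow> phi psi \<one>\<^bsub>H\<^esub> = 1"
  by (simp add: one_bs phi_bs lc_one)

lemma phi_mult:
  assumes l: "lin_char G psi" and a: "a \<in> carrier H" and b: "b \<in> carrier H"
  shows "phi psi (a \<otimes>\<^bsub>H\<^esub> b) = phi psi a * phi psi b"
proof -
  have inner: "(\<Sum>u\<in>carrier G. psi u * b (inv s \<otimes> u, 0)) = psi s * phi psi b"
    if s: "s \<in> carrier G" for s
  proof -
    have "(\<Sum>u\<in>carrier G. psi u * b (inv s \<otimes> u, 0)) = (\<Sum>u\<in>(\<lambda>t. s \<otimes> t) ` carrier G. psi u * b (inv s \<otimes> u, 0))"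
      using surj_const_mult[OF s] by simp
    also have "\<dots> = (\<Sum>t\<in>carrier G. psi (s \<otimes> t) * b (inv s \<otimes> (s \<otimes> t), 0))"
      by (subst sum.reindex[OF inj_on_cmult[OF s]]) simp
    also have "\<dots> = (\<Sum>t\<in>carrier G. psi s * (psi t * b (t, 0)))"
      using s l by (intro sum.cong refl) (simp add: lin_char_def m_assoc[symmetric])
    finally show ?thesis by (simp add: phi_def sum_distrib_left)
  qed
  have "phi psi (a \<otimes>\<^bsub>H\<^esub> b) = (\<Sum>u\<in>carrier G. psi u * (\<Sum>s\<in>carrier G. a (s,0) * b (inv s \<otimes> u, 0)))"
    unfolding phi_def using npos by (intro sum.cong refl) (simp add: mult_H_app)
  also have "\<dots> = (\<Sum>s\<in>carrier G. a (s,0) * (\<Sum>u\<in>carrier G. psi u * b (inv s \<otimes> u, 0)))"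
    unfolding sum_distrib_left by (rule trans[OF sum.swap]) (simp add: mult_ac)
  also have "\<dots> = (\<Sum>s\<in>carrier G. a (s,0) * (psi s * phi psi b))"
    by (intro sum.cong refl) (simp add: inner)
  also have "\<dots> = phi psi a * phi psi b"
    by (simp add: phi_def sum_distrib_right mult_ac)
  finally show ?thesis .
qed

lemma phi_diff: "phi psi (\<lambda>p. a p - b p) = phi psi a - phi psi b"
  by (simp add: phi_def sum_subtractf algebra_simps)

lemma J_carr: "ideal J H \<Longrightarrow> x \<in> J \<Longrightarrow> x \<in> carrier H"
  by (rule ideal.Icarr)

lemma J_add: "ideal J H \<Longrightarrow> a \<in> J \<Longrightarrow> b \<in> J \<Longrightarrow> (\<lambda>p. a p + b p) \<in> J"
proof -
  assume J: "ideal J H" and a: "a \<in> J" and b: "b \<in> J"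
  show ?thesis using additive_subgroup.a_closed[OF ideal.axioms(1)[OF J] a b] by (simp add: add_H)
qed

lemma J_zero: "ideal J H \<Longrightarrow> (\<lambda>_. 0) \<in> J"
proof -
  assume J: "ideal J H"
  show ?thesis using additive_subgroup.zero_closed[OF ideal.axioms(1)[OF J]] by (simp add: zero_H)
qed

lemma J_sc: "ideal J H \<Longrightarrow> a \<in> J \<Longrightarrow> sc c a \<in> J"
proof -
  assume J: "ideal J H" and a: "a \<in> J"
  interpret J: ideal J H by fact
  have "sc c \<one>\<^bsub>H\<^esub> \<otimes>\<^bsub>H\<^esub> a \<in> J" by (rule J.I_l_closed[OF a sc_carrier[OF one_closed_H]])
  thus ?thesis by (simp add: sc_mult_left l_one_H J.Icarr[OF a])
qed

lemma J_lin: "ideal J H \<Longrightarrow> a \<in> J \<Longrightarrow> b \<in> J \<Longrightarrow> (\<lambda>p. a p - c * b p) \<in> J"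
proof -
  assume J: "ideal J H" and a: "a \<in> J" and b: "b \<in> J"
  have "(\<lambda>p. a p + sc (- c) b p) \<in> J" by (rule J_add[OF J a J_sc[OF J b]])
  thus ?thesis by (simp add: sc_def)
qed

lemma J_sum: assumes J: "ideal J H" and fin: "finite S" and f: "\<And>s. s \<in> S \<Longrightarrow> f s \<in> J"
  shows "(\<lambda>p. \<Sum>s\<in>S. c s * f s p) \<in> J"
  using fin f
proof (induction S rule: finite_induct)
  case empty
  thus ?case using J_zero[OF J] by simp
next
  case (insert x F)
  have "(\<lambda>p. sc (c x) (f x) p + (\<Sum>s\<in>F. c s * f s p)) \<in> J"
    using insert J by (intro J_add J_sc) auto
  thus ?case using insert by (simp add: sc_def)
qed

lemma J_lmul: "ideal J H \<Longrightarrow> a \<in> J \<Longrightarrow> x \<in> carrier H \<Longrightarrow> x \<otimes>\<^bsub>H\<^esub> a \<in> J"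
  by (rule ideal.I_l_closed)
lemma J_rmul: "ideal J H \<Longrightarrow> a \<in> J \<Longrightarrow> x \<in> carrier H \<Longrightarrow> a \<otimes>\<^bsub>H\<^esub> x \<in> J"
  by (rule ideal.I_r_closed)

lemma J_one: "ideal J H \<Longrightarrow> \<one>\<^bsub>H\<^esub> \<in> J \<Longrightarrow> J = carrier H"
  by (rule ideal.one_imp_carrier)

section \<open>The ideal K\<close>

lemma K_ideal: assumes l: "lin_char G psi" shows "ideal (K psi) H"
proof (rule idealI[OF ring_H])
  interpret R: ring H by (rule ring_H)
  show "subgroup (K psi) (add_monoid H)"
  proof (rule R.add.subgroupI)
    show "K psi \<subseteq> carrier H" by (auto simp: K_def)
    show "K psi \<noteq> {}" using R.zero_closed by (auto simp: K_def zero_H phi_def)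
  next
    fix a assume a: "a \<in> K psi"
    show "\<ominus>\<^bsub>H\<^esub> a \<in> K psi"
      using a R.a_inv_closed[of a] by (auto simp: K_def minus_H phi_def sum_negf)
  next
    fix a b assume a: "a \<in> K psi" and b: "b \<in> K psi"
    thus "a \<oplus>\<^bsub>H\<^esub> b \<in> K psi"
      using R.a_closed[of a b] by (auto simp: K_def add_H phi_add)
  qed
next
  fix a x assume a: "a \<in> K psi" and x: "x \<in> carrier H"
  show "x \<otimes>\<^bsub>H\<^esub> a \<in> K psi" using a x by (auto simp: K_def mult_closed_H phi_mult[OF l])
  show "a \<otimes>\<^bsub>H\<^esub> x \<in> K psi" using a x by (auto simp: K_def mult_closed_H phi_mult[OF l])
qed

lemma K_cp: assumes l: "lin_char G psi" shows "completely_prime H (K psi)"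
  unfolding completely_prime_def
proof (intro conjI ballI impI)
  show "ideal (K psi) H" by (rule K_ideal[OF l])
  show "K psi \<noteq> carrier H"
  proof
    assume "K psi = carrier H"
    hence "\<one>\<^bsub>H\<^esub> \<in> K psi" using one_closed_H by simp
    thus False using phi_one[OF l] by (simp add: K_def)
  qed
  fix a b assume a: "a \<in> carrier H" and b: "b \<in> carrier H" and ab: "a \<otimes>\<^bsub>H\<^esub> b \<in> K psi"
  thus "a \<in> K psi \<or> b \<in> K psi" by (auto simp: K_def phi_mult[OF l])
qed

lemma e_carrier: "char_idem G psi \<in> carrier H"
  by (rule inHI) (auto simp: char_idem_def npos split: if_splits)

lemma cardG: "of_nat (card (carrier G)) \<noteq> (0::'k)"
  using finG one_closed by (auto simp: card_eq_0_iff)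

lemma phi_e: assumes l: "lin_char G psi" shows "phi psi (char_idem G psi) = 1"
proof -
  have "phi psi (char_idem G psi) = (\<Sum>s\<in>carrier G. 1 / of_nat (card (carrier G)))"
    unfolding phi_def char_idem_def
  proof (intro sum.cong refl)
    fix x assume x: "x \<in> carrier G"
    have "psi x * psi (inv x) = 1" using lc_inv[OF l x] by (simp add: mult.commute)
    thus "psi x * (case (x, 0) of (u, m) \<Rightarrow> if u \<in> carrier G \<and> m = 0 then psi (inv u) / of_nat (card (carrier G)) else 0)
        = 1 / of_nat (card (carrier G))" using x by simp
  qed
  thus ?thesis using cardG by simp
qed

lemma one_minus_e_K: assumes l: "lin_char G psi"
  shows "\<one>\<^bsub>H\<^esub> \<ominus>\<^bsub>H\<^esub> char_idem G psi \<in> K psi"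
  using one_closed_H e_carrier phi_one[OF l] phi_e[OF l]
  by (simp add: K_def diff_H phi_diff mult_closed_H) (rule inHI, auto simp: one_bs bs_app npos char_idem_def split: if_splits)

end

context HS begin

lemma span:
  assumes l: "lin_char G psi" and J: "ideal J H" and zJ: "zz \<in> J"
    and dJ: "\<And>s. s \<in> carrier G \<Longrightarrow> d s (psi s) \<in> J"
  shows "K psi \<subseteq> J"
proof
  fix x assume xK: "x \<in> K psi"
  hence x: "x \<in> carrier H" and px: "phi psi x = 0" by (auto simp: K_def)
  define x' where "x' = (\<lambda>(u,m). x (u, Suc m))"
  have x'c: "x' \<in> carrier H"
  proof (rule inHI)
    fix s i assume "x' (s,i) \<noteq> 0"
    hence "x (s, Suc i) \<noteq> 0" by (simp add: x'_def)
    hence "s \<in> carrier G \<and> Suc i < n" using inH0[OF x] by blast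
    thus "s \<in> carrier G \<and> i < n" by simp
  qed
  define x0 where "x0 = (\<lambda>p. \<Sum>s\<in>carrier G. x (s,0) * d s (psi s) p)"
  have x0J: "x0 \<in> J" unfolding x0_def by (rule J_sum[OF J finG dJ])
  have x'J: "x' \<otimes>\<^bsub>H\<^esub> zz \<in> J" by (rule J_lmul[OF J zJ x'c])
  have "x = (\<lambda>p. x0 p + (x' \<otimes>\<^bsub>H\<^esub> zz) p)"
  proof (rule ext, clarify)
    fix u m
    have "x0 (u,m) = (\<Sum>s\<in>carrier G. x (s,0) * bs s 0 (u,m)) - bs \<one> 0 (u,m) * phi psi x"
      unfolding x0_def d_def phi_def by (simp add: right_diff_distrib sum_subtractf sum_distrib_left mult_ac)
    also have "\<dots> = (\<Sum>s\<in>carrier G. x (s,0) * bs s 0 (u,m))" using px by simp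
    also have "\<dots> = (if u \<in> carrier G then x (u,0) * bs u 0 (u,m) else 0)"
      by (rule sum_single[OF finG]) (auto simp: bs_app)
    finally have x0v: "x0 (u,m) = (if u \<in> carrier G \<and> m = 0 then x (u,0) else 0)"
      by (simp add: bs_app)
    have zv: "(x' \<otimes>\<^bsub>H\<^esub> zz) (u,m) = (if u \<in> carrier G \<and> m < n \<and> 1 \<le> m then x (u,m) else 0)"
      unfolding zz_def by (subst right_bs) (auto simp: x'_def chi_one)
    show "x (u,m) = x0 (u,m) + (x' \<otimes>\<^bsub>H\<^esub> zz) (u,m)"
      using inH0[OF x, of u m] npos by (auto simp: x0v zv)
  qed
  thus "x \<in> J" using J_add[OF J x0J x'J] by simp
qed

lemma ds_eq:
  assumes l: "lin_char G psi" and s: "s \<in> carrier G"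
  shows "d s (psi s) = (\<lambda>p. (bs s 0 \<otimes>\<^bsub>H\<^esub> (\<one>\<^bsub>H\<^esub> \<ominus>\<^bsub>H\<^esub> char_idem G psi)) p
                          - psi s * (\<one>\<^bsub>H\<^esub> \<ominus>\<^bsub>H\<^esub> char_idem G psi) p)"
proof (rule ext, clarify)
  fix u m
  define N where "N = (of_nat (card (carrier G)) :: 'k)"
  have f: "\<one>\<^bsub>H\<^esub> \<ominus>\<^bsub>H\<^esub> char_idem G psi = (\<lambda>(v,k). (if v = \<one> \<and> k = 0 then 1 else 0)
       - (if v \<in> carrier G \<and> k = 0 then psi (inv v) / N else 0))"
    unfolding diff_H[OF one_closed_H e_carrier] by (rule ext, clarify, simp add: one_H char_idem_def N_def)
  show "d s (psi s) (u,m) = (bs s 0 \<otimes>\<^bsub>H\<^esub> (\<one>\<^bsub>H\<^esub> \<ominus>\<^bsub>H\<^esub> char_idem G psi)) (u,m)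
                          - psi s * (\<one>\<^bsub>H\<^esub> \<ominus>\<^bsub>H\<^esub> char_idem G psi) (u,m)"
  proof (cases "u \<in> carrier G \<and> m = 0")
    case True
    hence u: "u \<in> carrier G" and m: "m = 0" by auto
    have h1: "(inv s \<otimes> u = \<one>) = (u = s)"
      using s u by (metis inv_closed inv_solve_left' r_one one_closed)
    have h2: "psi (inv (inv s \<otimes> u)) = psi (inv u) * psi s"
      using s u l by (simp add: inv_mult_group lin_char_def)
    show ?thesis using u m s npos
      by (simp add: left_bs f d_def bs_app h1 h2 algebra_simps)
  next
    case False
    thus ?thesis using s by (auto simp: left_bs f d_def bs_app)
  qed
qed

lemma zz_from_d:
  assumes l: "lin_char G psi" and J: "ideal J H" and g: "g \<in> carrier G" and cg: "chi g \<noteq> 1"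
    and dJ: "d g (psi g) \<in> J"
  shows "zz \<in> J"
proof -
  define A where "A = d g (psi g) \<otimes>\<^bsub>H\<^esub> zz"
  define Bm where "Bm = zz \<otimes>\<^bsub>H\<^esub> d g (psi g)"
  have AJ: "A \<in> J" unfolding A_def by (rule J_rmul[OF J dJ zz_carrier])
  have BJ: "Bm \<in> J" unfolding Bm_def by (rule J_lmul[OF J dJ zz_carrier])
  define w where "w = (\<lambda>p. Bm p - chi g * A p)"
  have wJ: "w \<in> J" unfolding w_def by (rule J_lin[OF J BJ AJ])
  have g1: "g \<noteq> \<one>" using cg chi_one by auto
  have pg: "psi g \<noteq> 0" using l g by (simp add: lin_char_def)
  have Av: "A (u,m) = (if u = g \<and> m = 1 then 1 else if u = \<one> \<and> m = 1 then - psi g else 0)" for u m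
    unfolding A_def zz_def using g g1 n2 by (subst right_bs) (auto simp: d_def bs_app)
  have Bv: "Bm (u,m) = (if u = g \<and> m = 1 then chi g else if u = \<one> \<and> m = 1 then - psi g else 0)" for u m
    unfolding Bm_def zz_def using g g1 n2 by (subst left_bs) (auto simp: d_def bs_app chi_one)
  have "zz = sc (inverse (psi g * (chi g - 1))) w"
  proof (rule ext, clarify)
    fix u m
    have "chi g - 1 \<noteq> 0" using cg by simp
    thus "zz (u,m) = sc (inverse (psi g * (chi g - 1))) w (u,m)"
      using pg g1 by (auto simp: sc_def w_def Av Bv zz_def bs_app field_simps)
  qed
  thus ?thesis using J_sc[OF J wJ] by simp
qed

lemma Idl_eq:
  assumes l: "lin_char G psi" and g: "g \<in> carrier G" and cg: "chi g \<noteq> 1"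
  shows "Idl\<^bsub>H\<^esub> {\<one>\<^bsub>H\<^esub> \<ominus>\<^bsub>H\<^esub> char_idem G psi} = K psi"
proof
  interpret R: ring H by (rule ring_H)
  have fc: "\<one>\<^bsub>H\<^esub> \<ominus>\<^bsub>H\<^esub> char_idem G psi \<in> carrier H"
    using R.minus_closed[OF one_closed_H e_carrier] .
  show "Idl\<^bsub>H\<^esub> {\<one>\<^bsub>H\<^esub> \<ominus>\<^bsub>H\<^esub> char_idem G psi} \<subseteq> K psi"
    by (rule R.genideal_minimal[OF K_ideal[OF l]]) (simp add: one_minus_e_K[OF l])
  define J where "J = Idl\<^bsub>H\<^esub> {\<one>\<^bsub>H\<^esub> \<ominus>\<^bsub>H\<^esub> char_idem G psi}"
  have J: "ideal J H" unfolding J_def by (rule R.genideal_ideal) (simp add: fc)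
  have fJ: "\<one>\<^bsub>H\<^esub> \<ominus>\<^bsub>H\<^esub> char_idem G psi \<in> J" unfolding J_def by (rule R.genideal_self'[OF fc])
  have dJ: "d s (psi s) \<in> J" if s: "s \<in> carrier G" for s
    unfolding ds_eq[OF l s] by (rule J_lin[OF J J_lmul[OF J fJ bs_carrier[OF s npos]] fJ])
  have zJ: "zz \<in> J" by (rule zz_from_d[OF l J g cg dJ[OF g]])
  show "K psi \<subseteq> Idl\<^bsub>H\<^esub> {\<one>\<^bsub>H\<^esub> \<ominus>\<^bsub>H\<^esub> char_idem G psi}"
    using span[OF l J zJ dJ] by (simp add: J_def)
qed

end

context HS begin

lemma cp_ideal: "completely_prime H I \<Longrightarrow> ideal I H"
  by (simp add: completely_prime_def)
lemma cp_one: assumes cp: "completely_prime H I" shows "\<one>\<^bsub>H\<^esub> \<notin> I"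
proof
  assume o: "\<one>\<^bsub>H\<^esub> \<in> I"
  have "ideal I H" and ne: "I \<noteq> carrier H" using cp by (simp_all add: completely_prime_def)
  hence "I = carrier H" using J_one o by simp
  with ne show False by contradiction
qed
lemma cp_prime: assumes cp: "completely_prime H I" and "a \<in> carrier H" "b \<in> carrier H" "a \<otimes>\<^bsub>H\<^esub> b \<in> I"
  shows "a \<in> I \<or> b \<in> I"
proof -
  have "\<forall>a\<in>carrier H. \<forall>b\<in>carrier H. a \<otimes>\<^bsub>H\<^esub> b \<in> I \<longrightarrow> a \<in> I \<or> b \<in> I"
    using cp by (simp add: completely_prime_def)
  thus ?thesis using assms(2-4) by blast
qed

lemma sc_one_notin:
  assumes cp: "completely_prime H I" and c: "c \<noteq> 0" shows "sc c \<one>\<^bsub>H\<^esub> \<notin> I"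
proof
  assume "sc c \<one>\<^bsub>H\<^esub> \<in> I"
  hence "sc (inverse c) (sc c \<one>\<^bsub>H\<^esub>) \<in> I" by (rule J_sc[OF cp_ideal[OF cp]])
  moreover have "sc (inverse c) (sc c \<one>\<^bsub>H\<^esub>) = \<one>\<^bsub>H\<^esub>" 
  proof (rule ext)
    fix p
    have "inverse c * (c * \<one>\<^bsub>H\<^esub> p) = (inverse c * c) * \<one>\<^bsub>H\<^esub> p" by (rule mult.assoc[symmetric])
    also have "\<dots> = \<one>\<^bsub>H\<^esub> p" using c by simp
    finally show "sc (inverse c) (sc c \<one>\<^bsub>H\<^esub>) p = \<one>\<^bsub>H\<^esub> p" by (simp only: sc_def)
  qed
  ultimately have "\<one>\<^bsub>H\<^esub> \<in> I" by (simp only:)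
  with cp_one[OF cp] show False by contradiction
qed

lemma zz_in: assumes cp: "completely_prime H I" shows "zz \<in> I"
proof -
  have I: "ideal I H" by (rule cp_ideal[OF cp])
  have step: "bs \<one> k \<otimes>\<^bsub>H\<^esub> zz = (if Suc k < n then bs \<one> (Suc k) else (\<lambda>_. 0))" for k
    unfolding zz_def by (rule ext, clarify) (simp add: bs_mult bs_app chi_one)
  have claim: "1 \<le> k \<longrightarrow> k < n \<longrightarrow> bs \<one> k \<in> I \<longrightarrow> zz \<in> I" for k
  proof (induction k)
    case 0 thus ?case by simp
  next
    case (Suc k)
    show ?case
    proof (intro impI)
      assume k1: "1 \<le> Suc k" and kn: "Suc k < n" and kI: "bs \<one> (Suc k) \<in> I"
      show "zz \<in> I"
      proof (cases "k = 0")
        case True thus ?thesis using kI by (simp add: zz_def)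
      next
        case False
        have kn': "k < n" using kn by simp
        have "bs \<one> k \<otimes>\<^bsub>H\<^esub> zz \<in> I" using kI kn by (simp only: step if_True)
        hence "bs \<one> k \<in> I \<or> zz \<in> I"
          by (rule cp_prime[OF cp bs_carrier[OF one_closed kn'] zz_carrier])
        moreover have "1 \<le> k" "k < n" using False kn by auto
        ultimately show ?thesis using Suc.IH by blast
      qed
    qed
  qed
  have nn: "\<not> Suc (n - 1) < n" "n - 1 < n" using n2 by auto
  have "bs \<one> (n - 1) \<otimes>\<^bsub>H\<^esub> zz \<in> I" using J_zero[OF I] nn(1) by (simp only: step if_False)
  hence "bs \<one> (n - 1) \<in> I \<or> zz \<in> I"
    by (rule cp_prime[OF cp bs_carrier[OF one_closed nn(2)] zz_carrier])
  moreover have "1 \<le> n - 1" "n - 1 < n" using n2 by auto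
  ultimately show ?thesis using claim[of "n - 1"] by blast
qed

lemma pow_one_exists:
  assumes s: "s \<in> carrier G" shows "\<exists>N::nat. 0 < N \<and> s [^] N = \<one>"
proof -
  define f where "f = (\<lambda>i::nat. s [^] i)"
  have "\<not> inj_on f {..card (carrier G)}"
  proof
    assume inj: "inj_on f {..card (carrier G)}"
    have sub: "f ` {..card (carrier G)} \<subseteq> carrier G" using s by (auto simp: f_def)
    have "card {..card (carrier G)} \<le> card (carrier G)"
      by (rule card_inj_on_le[OF inj sub finG])
    thus False by simp
  qed
  then obtain i j where ij: "i \<noteq> j" "f i = f j" by (auto simp: inj_on_def)
  have main: "\<exists>N::nat. 0 < N \<and> s [^] N = \<one>" if "i < j" "s [^] i = s [^] j" for i j :: nat
  proof -
    have "s [^] i \<otimes> s [^] (j - i) = s [^] (i + (j - i))"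
      using s by (simp add: nat_pow_mult)
    also have "\<dots> = s [^] i \<otimes> \<one>" using that s by simp
    finally have "s [^] i \<otimes> s [^] (j - i) = s [^] i \<otimes> \<one>" .
    hence "s [^] (j - i) = \<one>" using s by (metis Units_eq Units_l_cancel nat_pow_closed one_closed)
    moreover have "0 < j - i" using that by simp
    ultimately show ?thesis by blast
  qed
  show ?thesis
  proof (cases "i < j")
    case True
    have "s [^] i = s [^] j" using ij(2) by (simp add: f_def)
    from main[OF True this] show ?thesis .
  next
    case False hence "j < i" using ij by simp
    moreover have "s [^] j = s [^] i" using ij(2) by (simp add: f_def)
    ultimately show ?thesis by (rule main)
  qed
qed

definition evc :: "'g \<Rightarrow> 'k poly \<Rightarrow> 'g \<Rightarrow> 'k" where
  "evc s p u = (\<Sum>i\<le>degree p. if s [^] i = u then coeff p i else 0)"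

definition ev :: "'g \<Rightarrow> 'k poly \<Rightarrow> 'g \<times> nat \<Rightarrow> 'k" where
  "ev s p = (\<lambda>(u,m). if m = 0 \<and> u \<in> carrier G then evc s p u else 0)"

lemma evc_bound: "degree p \<le> M \<Longrightarrow> evc s p u = (\<Sum>i\<le>M. if s [^] i = u then coeff p i else 0)"
  unfolding evc_def by (rule sum.mono_neutral_right[symmetric]) (auto simp: coeff_eq_0)

lemma ev_carrier: "ev s p \<in> carrier H"
  by (rule inHI) (auto simp: ev_def npos split: if_splits)

lemma ev_one: "s \<in> carrier G \<Longrightarrow> ev s 1 = \<one>\<^bsub>H\<^esub>"
  by (rule ext, clarify) (auto simp: ev_def evc_def one_H)

lemma lin_factor: "(q :: 'k poly) * [:-x, 1:] = smult (-x) q + pCons 0 q"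
  by (simp add: mult_pCons_right smult_one)

lemma ev_mult:
  fixes q :: "'k poly" and x :: 'k
  assumes s: "s \<in> carrier G"
  shows "ev s (q * [:-x, 1:]) = ev s q \<otimes>\<^bsub>H\<^esub> d s x"
proof -
  have evc_m: "evc s (q * [:-x, 1:]) u = evc s q (u \<otimes> inv s) - x * evc s q u" if u: "u \<in> carrier G" for u
  proof -
    have dg: "degree (q * [:-x, 1:]) \<le> Suc (degree q)"
      using degree_mult_le[of q "[:-x,1:]"] by simp
    have "evc s (q * [:-x, 1:]) u = (\<Sum>i\<le>Suc (degree q). if s [^] i = u then coeff (q * [:-x, 1:]) i else 0)"
      by (rule evc_bound[OF dg])
    also have "\<dots> = (\<Sum>i\<le>Suc (degree q). (if s [^] i = u then coeff (pCons 0 q) i else 0))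
                     - x * (\<Sum>i\<le>Suc (degree q). if s [^] i = u then coeff q i else 0)"
    proof -
      have "(if s [^] i = u then coeff (q * [:-x, 1:]) i else 0) = (if s [^] i = u then coeff (pCons 0 q) i else 0)
          - x * (if s [^] i = u then coeff q i else 0)" for i
        by (simp only: lin_factor coeff_add coeff_smult) simp
      thus ?thesis by (simp only: sum_subtractf sum_distrib_left)
    qed
    also have "(\<Sum>i\<le>Suc (degree q). if s [^] i = u then coeff q i else 0) = evc s q u"
      by (rule evc_bound[symmetric]) simp
    also have "(\<Sum>i\<le>Suc (degree q). (if s [^] i = u then coeff (pCons 0 q) i else 0))
       = (\<Sum>i\<le>degree q. (if s [^] Suc i = u then coeff q i else 0))"
      by (subst sum.atMost_Suc_shift) (simp add: coeff_pCons_Suc cong: if_cong)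
    also have "\<dots> = evc s q (u \<otimes> inv s)"
      unfolding evc_def
    proof (rule sum.cong[OF refl])
      fix i
      have "(s [^] Suc i = u) = (s [^] i = u \<otimes> inv s)"
        using s u by (simp add: inv_solve_right[of "s [^] i" u s] eq_commute[of u])
      thus "(if s [^] Suc i = u then coeff q i else 0) = (if s [^] i = u \<otimes> inv s then coeff q i else 0)"
        by simp
    qed
    finally show ?thesis .
  qed
  have dsx: "d s x = (\<lambda>p. bs s 0 p - x * bs \<one> 0 p)" by (simp add: d_def)
  show ?thesis
  proof (rule ext, clarify)
    fix u m
    have L: "ev s (q * [:-x, 1:]) (u,m) = (if m = 0 \<and> u \<in> carrier G then evc s q (u \<otimes> inv s) - x * evc s q u else 0)"
    proof (cases "m = 0 \<and> u \<in> carrier G")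
      case True
      hence "ev s (q * [:-x, 1:]) (u,m) = evc s (q * [:-x, 1:]) u" unfolding ev_def by simp
      also have "\<dots> = evc s q (u \<otimes> inv s) - x * evc s q u" by (rule evc_m) (use True in simp)
      finally show ?thesis using True by simp
    next
      case False thus ?thesis unfolding ev_def by auto
    qed
    have R: "(ev s q \<otimes>\<^bsub>H\<^esub> d s x) (u,m) = (if m = 0 \<and> u \<in> carrier G then evc s q (u \<otimes> inv s) - x * evc s q u else 0)"
      unfolding dsx lin_right using s npos
      by (auto simp: ev_def right_bs r_one_H[OF ev_carrier, unfolded one_bs])
    show "ev s (q * [:-x, 1:]) (u,m) = (ev s q \<otimes>\<^bsub>H\<^esub> d s x) (u,m)"
      by (simp only: L R)
  qed
qed

lemma ev_prod_zero:
  assumes s: "s \<in> carrier G" and N: "0 < N" "s [^] N = \<one>"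
  shows "ev s (Polynomial.monom 1 N - 1) = (\<lambda>_. 0)"
proof (rule ext, clarify)
  fix u m
  define p where "p = (Polynomial.monom 1 N - 1 :: 'k poly)"
  have cN: "coeff p i = (if i = N then 1 else 0) - (if i = 0 then 1 else 0)" for i
    by (simp add: p_def coeff_monom)
  have dp: "degree p \<le> N"
    by (rule degree_le) (auto simp: cN)
  have "evc s p u = (\<Sum>i\<le>N. if s [^] i = u then coeff p i else 0)"
    by (rule evc_bound[OF dp])
  also have "\<dots> = (\<Sum>i\<in>{0, N}. if s [^] i = u then coeff p i else 0)"
    by (rule sum.mono_neutral_right) (auto simp: cN)
  also have "\<dots> = 0" using N by (simp add: cN)
  finally have "evc s p u = 0" .
  thus "ev s (Polynomial.monom 1 N - 1) (u, m) = 0" by (simp add: ev_def p_def)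
qed

lemma root_exists:
  assumes cp: "completely_prime H I" and s: "s \<in> carrier G"
  shows "\<exists>\<zeta>. d s \<zeta> \<in> I"
proof -
  have I: "ideal I H" by (rule cp_ideal[OF cp])
  obtain N :: nat where N: "0 < N" "s [^] N = \<one>" using pow_one_exists[OF s] by blast
  define p where "p = (Polynomial.monom 1 N - 1 :: 'k poly)"
  have cN: "coeff p i = (if i = N then 1 else 0) - (if i = 0 then 1 else 0)" for i
    by (simp add: p_def coeff_monom)
  have dp: "degree p = N"
  proof (rule antisym)
    show "degree p \<le> N" by (rule degree_le) (auto simp: cN)
    show "N \<le> degree p" by (rule le_degree) (use N in \<open>simp add: cN\<close>)
  qed
  have lc: "lead_coeff p = 1" using N by (simp add: dp cN)
  have p0: "p \<noteq> 0" using lc by auto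
  obtain A where A: "p = smult (lead_coeff p) (\<Prod>x\<in>#A. [:-x, 1:])"
    using alg_closed_imp_factorization[OF p0] by blast
  have pA: "p = (\<Prod>x\<in>#A. [:-x, 1:])" using A lc by simp
  have "ev s p = (\<lambda>_. 0)" unfolding p_def by (rule ev_prod_zero[OF s N])
  hence evA: "ev s (\<Prod>x\<in>#A. [:-x, 1:]) \<in> I" using J_zero[OF I] pA by simp
  have claim: "ev s (\<Prod>x\<in>#B. [:-x, 1:]) \<in> I \<longrightarrow> (\<exists>\<zeta>. d s \<zeta> \<in> I)" for B
  proof (induction B)
    case empty
    show ?case using cp_one[OF cp] by (simp add: ev_one[OF s])
  next
    case (add a B)
    have eq: "(\<Prod>x\<in>#add_mset a B. [:-x, 1:]) = (\<Prod>x\<in>#B. [:-x, 1:]) * [:-a, 1:]"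
      by (simp add: mult.commute)
    show ?case
    proof
      assume "ev s (\<Prod>x\<in>#add_mset a B. [:-x, 1:]) \<in> I"
      hence "ev s (\<Prod>x\<in>#B. [:-x, 1:]) \<otimes>\<^bsub>H\<^esub> d s a \<in> I"
        by (simp only: eq ev_mult[OF s])
      hence "ev s (\<Prod>x\<in>#B. [:-x, 1:]) \<in> I \<or> d s a \<in> I"
        by (rule cp_prime[OF cp ev_carrier d_carrier[OF s]])
      thus "\<exists>\<zeta>. d s \<zeta> \<in> I" using add.IH by blast
    qed
  qed
  show ?thesis using claim[of A] evA by blast
qed

lemma cp_char:
  assumes cp: "completely_prime H I"
  shows "\<exists>psi. lin_char G psi \<and> I = K psi"
proof -
  have I: "ideal I H" by (rule cp_ideal[OF cp])
  define psi where "psi t = (SOME \<zeta>. d t \<zeta> \<in> I)" for t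
  have dI: "d t (psi t) \<in> I" if t: "t \<in> carrier G" for t
    unfolding psi_def using root_exists[OF cp t] by (rule someI_ex)
  have uniq: "a = b" if t: "t \<in> carrier G" and a: "d t a \<in> I" and b: "d t b \<in> I" for t a b
  proof (rule ccontr)
    assume ab: "a \<noteq> b"
    have "(\<lambda>p. d t a p - 1 * d t b p) \<in> I" by (rule J_lin[OF I a b])
    moreover have "(\<lambda>p. d t a p - 1 * d t b p) = sc (b - a) \<one>\<^bsub>H\<^esub>"
      by (rule ext) (simp add: d_def sc_def one_bs algebra_simps)
    ultimately have "sc (b - a) \<one>\<^bsub>H\<^esub> \<in> I" by simp
    moreover have "b - a \<noteq> 0" using ab by simp
    ultimately show False using sc_one_notin[OF cp] by blast
  qed
  have mult: "psi (s \<otimes> t) = psi s * psi t" if s: "s \<in> carrier G" and t: "t \<in> carrier G" for s t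
  proof -
    have eq: "d (s \<otimes> t) (psi s * psi t) = (\<lambda>p. (d s (psi s) \<otimes>\<^bsub>H\<^esub> bs t 0) p - (- psi s) * d t (psi t) p)"
    proof (rule ext, clarify)
      fix u m
      show "d (s \<otimes> t) (psi s * psi t) (u, m) = (d s (psi s) \<otimes>\<^bsub>H\<^esub> bs t 0) (u, m) - (- psi s) * d t (psi t) (u, m)"
      proof (cases "u \<in> carrier G")
        case True
        have e1: "(u \<otimes> inv t = s) = (u = s \<otimes> t)" using inv_solve_right'[OF s True t] .
        have e2: "(u \<otimes> inv t = \<one>) = (u = t)" using inv_solve_right'[OF one_closed True t] t by simp
        have e3: "s \<otimes> t \<otimes> inv t = s" using s t by (simp add: m_assoc)
        show ?thesis using True npos s t
          by (simp add: right_bs d_def bs_app e1 e2 e3 algebra_simps)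
      next
        case False
        have "u \<noteq> s \<otimes> t" "u \<noteq> t" "u \<noteq> \<one>" using False s t by auto
        thus ?thesis using False by (simp add: right_bs[OF t] d_def bs_app)
      qed
    qed
    have "d (s \<otimes> t) (psi s * psi t) \<in> I"
      unfolding eq by (rule J_lin[OF I J_rmul[OF I dI[OF s] bs_carrier[OF t npos]] dI[OF t]])
    thus ?thesis using uniq[OF _ dI] s t by blast
  qed
  have nz: "psi s \<noteq> 0" if s: "s \<in> carrier G" for s
  proof
    assume "psi s = 0"
    hence "bs s 0 \<in> I" using dI[OF s] by (simp add: d_def)
    hence "bs (inv s) 0 \<otimes>\<^bsub>H\<^esub> bs s 0 \<in> I" by (rule J_lmul[OF I _ bs_carrier[OF inv_closed[OF s] npos]])
    moreover have "bs (inv s) 0 \<otimes>\<^bsub>H\<^esub> bs s 0 = \<one>\<^bsub>H\<^esub>"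
      using s npos by (simp add: bs_mult one_H) (rule ext, auto)
    ultimately show False using cp_one[OF cp] by simp
  qed
  have l: "lin_char G psi" unfolding lin_char_def using mult nz by blast
  have KI: "K psi \<subseteq> I" by (rule span[OF l I zz_in[OF cp] dI])
  have IK: "I \<subseteq> K psi"
  proof
    fix x assume xI: "x \<in> I"
    have x: "x \<in> carrier H" by (rule J_carr[OF I xI])
    show "x \<in> K psi"
    proof (rule ccontr)
      assume "x \<notin> K psi"
      hence c: "phi psi x \<noteq> 0" using x by (simp add: K_def)
      define y where "y = (\<lambda>p. x p - phi psi x * \<one>\<^bsub>H\<^esub> p)"
      have yc: "y \<in> carrier H"
        by (rule inHI) (use x in \<open>auto simp: y_def one_H carrier_H npos split: if_splits\<close>)
      have "phi psi y = 0" unfolding y_def by (simp add: phi_lin phi_one[OF l])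
      hence "y \<in> I" using KI yc by (auto simp: K_def)
      hence "(\<lambda>p. x p - 1 * y p) \<in> I" by (rule J_lin[OF I xI])
      moreover have "(\<lambda>p. x p - 1 * y p) = sc (phi psi x) \<one>\<^bsub>H\<^esub>"
        by (rule ext) (simp add: y_def sc_def)
      ultimately show False using sc_one_notin[OF cp c] by simp
    qed
  qed
  show ?thesis using l KI IK by blast
qed

end

theorem theorem4p6:
  fixes G :: "('g, 'm) monoid_scheme"
    and chi :: "'g \<Rightarrow> 'k::{alg_closed_field, field_char_0}"
    and g :: 'g and n :: nat and I :: "('g \<times> nat \<Rightarrow> 'k) set"
  assumes "group G" and "finite (carrier G)"
    and "lin_char G chi"
    and "g \<in> carrier G" and "\<forall>s\<in>carrier G. g \<otimes>\<^bsub>G\<^esub> s = s \<otimes>\<^bsub>G\<^esub> g"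
    and "is_mult_order (chi g) n" and "n \<ge> 2"
  shows "completely_prime (H_alg G chi n) I \<longleftrightarrow>
    (\<exists>psi. lin_char G psi \<and>
       I = Idl\<^bsub>H_alg G chi n\<^esub> {\<one>\<^bsub>H_alg G chi n\<^esub> \<ominus>\<^bsub>H_alg G chi n\<^esub> char_idem G psi})"
proof -
  interpret HS G chi n
  proof (rule HS.intro)
    show "group G" by fact
    show "HS_axioms G chi n" by (rule HS_axioms.intro) (use assms in auto)
  qed
  have g: "g \<in> carrier G" by fact
  have "(chi g) ^ 1 \<noteq> 1" using assms(6,7) unfolding is_mult_order_def by auto
  hence cg: "chi g \<noteq> 1" by simp
  show ?thesis
  proof
    assume cp: "completely_prime (H_alg G chi n) I"
    obtain psi where l: "lin_char G psi" and IK: "I = K psi" using cp_char[OF cp] by blast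
    show "\<exists>psi. lin_char G psi \<and>
       I = Idl\<^bsub>H_alg G chi n\<^esub> {\<one>\<^bsub>H_alg G chi n\<^esub> \<ominus>\<^bsub>H_alg G chi n\<^esub> char_idem G psi}"
      using l IK Idl_eq[OF l g cg] by auto
  next
    assume "\<exists>psi. lin_char G psi \<and>
       I = Idl\<^bsub>H_alg G chi n\<^esub> {\<one>\<^bsub>H_alg G chi n\<^esub> \<ominus>\<^bsub>H_alg G chi n\<^esub> char_idem G psi}"
    then obtain psi where l: "lin_char G psi"
      and IE: "I = Idl\<^bsub>H_alg G chi n\<^esub> {\<one>\<^bsub>H_alg G chi n\<^esub> \<ominus>\<^bsub>H_alg G chi n\<^esub> char_idem G psi}"
      by blast
    have "I = K psi" using IE Idl_eq[OF l g cg] by simp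
    thus "completely_prime (H_alg G chi n) I" using K_cp[OF l] by simp
  qed
qed

end
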